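(* Let $\{J_m(z)\}_{m\geq 0}$ be the sequence generated by $\sum_{m=0}^{\infty}J_m(z)t^m=\frac{1}{1+t+zt^3}$. For $\theta\in(2\pi/3,\pi)$ define \[ r=r(\theta)=\frac{1-4\cos^2\theta}{2\cos\theta},\quad q=q(\theta)=-2\cos\theta,\quad z=z(\theta)=-\frac{1}{r(\theta)^3q(\theta)}, \] \[ t_1=r(\theta)e^{i\theta},\quad t_2=r(\theta)e^{-i\theta},\quad t_3=r(\theta)q(\theta). \] Then for each $\theta\in(2\pi/3,\pi)$ and each $m\geq 0$, \[ J_m(z(\theta))=\frac{q^{m+1}\big[(-2\cos\theta)\sin((m+1)\theta)-\sin((m+2)\theta)\big]+\sin\theta}{z(t_1-t_2)(t_2-t_3)(t_3-t_1)\,t_1^{m+1}t_2^{m+1}t_3^{m+1}}\cdot 2i\, r^{2m+3}. \]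
   Context: A sequence $\{J_m(z)\}$ is generated by $f(t,z)$ if, for each $z\in\mathbb{C}$, $f(t,z)$ is analytic in $t$ in a neighborhood of $t=0$ and $J_m(z)$ is the coefficient of $t^m$ in the power series expansion of $f(t,z)$ in $t$ about $0$. *)

theory Defs
  imports "HOL-Analysis.Analysis"
begin

definition gen_seq :: "(complex \<Rightarrow> complex \<Rightarrow> complex) \<Rightarrow> nat \<Rightarrow> complex \<Rightarrow> complex" where
  "gen_seq f m z = (deriv ^^ m) (\<lambda>t. f t z) 0 / of_nat (fact m)"

definition J :: "nat \<Rightarrow> complex \<Rightarrow> complex" where
  "J m z = gen_seq (\<lambda>t z. 1 / (1 + t + z * t ^ 3)) m z"

definition r_th :: "real \<Rightarrow> real" where
  "r_th \<theta> = (1 - 4 * (cos \<theta>)\<^sup>2) / (2 * cos \<theta>)"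

definition q_th :: "real \<Rightarrow> real" where
  "q_th \<theta> = - 2 * cos \<theta>"

definition z_th :: "real \<Rightarrow> complex" where
  "z_th \<theta> = complex_of_real (- 1 / ((r_th \<theta>) ^ 3 * q_th \<theta>))"

end

theory Submission
  imports Defs
begin


lemma J_rec:
  fixes z :: complex
  shows "J 0 z = 1" "J 1 z = -1" "J 2 z = 1"
    "\<And>n. J (n+3) z = - J (n+2) z - z * J n z"
proof -
  define P where "P = 1 + fps_X + fps_const z * fps_X ^ 3"
  have P0: "fps_nth P 0 = 1" by (simp add: P_def)
  have "(\<lambda>t. 1 + t + z * t ^ 3) has_fps_expansion P"
    unfolding P_def by (intro fps_expansion_intros)
  then have "(\<lambda>t. inverse (1 + t + z * t ^ 3)) has_fps_expansion inverse P"
    using P0 by (intro fps_expansion_intros) auto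
  moreover have "(\<lambda>t. inverse (1 + t + z * t ^ 3)) = (\<lambda>t. 1 / (1 + t + z * t ^ 3))"
    by (simp add: inverse_eq_divide)
  ultimately have E: "(\<lambda>t. 1 / (1 + t + z * t ^ 3)) has_fps_expansion inverse P" by simp
  define F where "F = inverse P"
  have JF: "J m z = fps_nth F m" for m
    unfolding J_def gen_seq_def F_def using fps_nth_fps_expansion[OF E, of m] by simp
  have FP: "F * P = 1" unfolding F_def using P0 by (simp add: inverse_mult_eq_1)
  have FP': "F + fps_X * F + fps_const z * (fps_X ^ 3 * F) = 1"
    using FP unfolding P_def by (simp add: algebra_simps)
  have co: "fps_nth F n + (if n = 0 then 0 else fps_nth F (n - 1)) + z * (if n < 3 then 0 else fps_nth F (n - 3)) = (if n = 0 then 1 else 0)" for n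
  proof -
    have "fps_nth (F + fps_X * F + fps_const z * (fps_X ^ 3 * F)) n = fps_nth (1::complex fps) n"
      using FP' by simp
    then show ?thesis by (simp add: fps_X_power_mult_nth fps_X_mult_nth)
  qed
  have c0: "fps_nth F 0 = 1" using co[of 0] by simp
  have c1: "fps_nth F 1 = -1" using co[of 1] c0 by (simp add: eq_neg_iff_add_eq_0)
  have c2: "fps_nth F 2 = 1" using co[of 2] c1 by (simp add: add_eq_0_iff)
  show "J 0 z = 1" "J 1 z = -1" "J 2 z = 1" using c0 c1 c2 JF by auto
  show "J (n+3) z = - J (n+2) z - z * J n z" for n
    using co[of "n+3"] unfolding JF by (simp add: algebra_simps eq_neg_iff_add_eq_0)
qed


lemma alg:
  fixes w v Q R Z :: complex
  assumes wv: "w * v = 1" and Qd: "Q = -(w+v)" and RQ: "R * Q = Q^2 - 1" and Zd: "Z * R^3 * Q = -1"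
    and nz: "R \<noteq> 0" "Q \<noteq> 0" "w \<noteq> v" "v \<noteq> Q" "w \<noteq> Q"
  defines "D \<equiv> (R * w - R * v) * (R * v - R * Q) * (R * Q - R * w)"
  defines "al \<equiv> (Q * w-w^2)/(Z * D)" and "be \<equiv> -(Q * v-v^2)/(Z * D)" and "ga \<equiv> (w-v)/(Q * Z * D)"
  shows "al + be + ga = 1" "al * (w/R) + be * (v/R) + ga * (1/(R * Q)) = -1"
    "al * (w/R)^2 + be * (v/R)^2 + ga * (1/(R * Q))^2 = 1"
proof -
  have w0: "w \<noteq> 0" "v \<noteq> 0" using wv by auto
  have Z0: "Z \<noteq> 0" using Zd by auto
  have D0: "D \<noteq> 0" using nz unfolding D_def by auto
  have Dd: "Q * Z * D = -((w-v) * (v-Q) * (Q-w))"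
  proof -
    have "Q * Z * D = (Z * R^3 * Q) * ((w-v) * (v-Q) * (Q-w))" unfolding D_def by algebra
    then show ?thesis using Zd by simp
  qed
  show "al + be + ga = 1" unfolding al_def be_def ga_def using D0 Z0 nz w0 
    apply (simp add: field_simps)
    using wv Qd RQ Zd Dd by algebra
  show "al * (w/R) + be * (v/R) + ga * (1/(R * Q)) = -1" unfolding al_def be_def ga_def using D0 Z0 nz w0 
    apply (simp add: field_simps)
    using wv Qd RQ Zd Dd by algebra
  show "al * (w/R)^2 + be * (v/R)^2 + ga * (1/(R * Q))^2 = 1" unfolding al_def be_def ga_def using D0 Z0 nz w0 
    apply (simp add: field_simps)
    using wv Qd RQ Zd Dd by algebra
qed


lemma repr:
  fixes w v Q R Z :: complex
  assumes wv: "w * v = 1" 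
    and nz: "R \<noteq> 0" "Q \<noteq> 0" "Z \<noteq> 0" "w \<noteq> v" "v \<noteq> Q" "w \<noteq> Q"
  defines "D \<equiv> (R * w - R * v) * (R * v - R * Q) * (R * Q - R * w)"
  defines "al \<equiv> (Q * w-w^2)/(Z * D)" and "be \<equiv> -(Q * v-v^2)/(Z * D)" and "ga \<equiv> (w-v)/(Q * Z * D)"
  shows "(Q^(m+1) * (Q * ((w^(m+1) - v^(m+1))/(2*\<i>)) - (w^(m+2) - v^(m+2))/(2*\<i>)) + (w^1 - v^1)/(2*\<i>))
    / (Z * (R * w - R * v) * (R * v - R * Q) * (R * Q - R * w) * (R * w)^(m+1) * (R * v)^(m+1) * (R * Q)^(m+1))
    * (2 * \<i> * R^(2*m+3)) = al * (w/R)^m + be * (v/R)^m + ga * (1/(R * Q))^m"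
proof -
  have w0: "w \<noteq> 0" "v \<noteq> 0" using wv by auto
  have D0: "D \<noteq> 0" using nz unfolding D_def by auto
  have pr: "(R * w)^(m+1) * (R * v)^(m+1) * (R * Q)^(m+1) = R^(2*m+3) * (R^m * Q^(m+1))"
  proof -
    have "(R * w)^(m+1) * (R * v)^(m+1) * (R * Q)^(m+1) = (R^3 * Q * (w * v))^(m+1)"
      by (simp add: power_mult_distrib algebra_simps power3_eq_cube)
    also have "\<dots> = R^(3*m+3) * Q^(m+1)" using wv by (simp add: power_mult_distrib power_mult[symmetric] power_add)
    also have "\<dots> = R^(2*m+3) * (R^m * Q^(m+1))" by (simp add: power_add[symmetric] algebra_simps)
    finally show ?thesis .
  qed
  have e1: "Z * (R * w - R * v) * (R * v - R * Q) * (R * Q - R * w) * (R * w)^(m+1) * (R * v)^(m+1) * (R * Q)^(m+1)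
     = (Z * D) * R^(2*m+3) * (R^m * Q^(m+1))"
  proof -
    have "Z * (R * w - R * v) * (R * v - R * Q) * (R * Q - R * w) * (R * w)^(m+1) * (R * v)^(m+1) * (R * Q)^(m+1)
      = (Z * D) * ((R * w)^(m+1) * (R * v)^(m+1) * (R * Q)^(m+1))" unfolding D_def by (simp only: mult.assoc)
    then show ?thesis unfolding pr by (simp only: mult.assoc)
  qed
  have R3: "R^(2*m+3) \<noteq> 0" using nz by simp
  have vm: "v^m * w^m = 1" using wv by (metis power_mult_distrib mult.commute power_one)
  define E where "E = Z * D * R^m * Q^(m+1)"
  have E0: "E \<noteq> 0" using nz D0 unfolding E_def by simp
  define M where "M = Q^(m+1) * (Q * (w^(m+1) - v^(m+1)) - (w^(m+2) - v^(m+2))) + (w - v)"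
  have L: "(Q^(m+1) * (Q * ((w^(m+1) - v^(m+1))/(2*\<i>)) - (w^(m+2) - v^(m+2))/(2*\<i>)) + (w^1 - v^1)/(2*\<i>))
    / ((Z * D) * R^(2*m+3) * (R^m * Q^(m+1))) * (2 * \<i> * R^(2*m+3)) = M / E"
    unfolding M_def E_def using R3 D0 nz by (simp add: field_simps)
  have RR: "al * (w/R)^m + be * (v/R)^m + ga * (1/(R * Q))^m = M / E"
    unfolding M_def E_def al_def be_def ga_def using R3 D0 nz apply (simp add: field_simps power_divide power_add) by algebra
  show ?thesis unfolding e1 L RR ..
qed

lemma root_rec:
  fixes a c Z :: complex
  assumes "a^3 + a^2 + Z = 0"
  shows "c * a^(n+3) = - (c * a^(n+2)) - Z * (c * a^n)"
proof -
  have "c * a^(n+3) + c * a^(n+2) + Z * (c * a^n) = c * a^n * (a^3 + a^2 + Z)"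
    by (simp add: power_add algebra_simps power2_eq_square)
  also have "\<dots> = 0" using assms by simp
  finally have h: "c * a^(n+3) + c * a^(n+2) + Z * (c * a^n) = 0" .
  show ?thesis using h by (simp only: eq_diff_eq eq_neg_iff_add_eq_0) (simp add: ac_simps)
qed

lemma roots:
  fixes w v Q R Z :: complex
  assumes wv: "w * v = 1" and Qd: "Q = -(w+v)" and RQ: "R * Q = Q^2 - 1" and Zd: "Z * R^3 * Q = -1"
    and nz: "R \<noteq> 0" "Q \<noteq> 0"
  shows "(w/R)^3 + (w/R)^2 + Z = 0" "(v/R)^3 + (v/R)^2 + Z = 0" "(1/(R * Q))^3 + (1/(R * Q))^2 + Z = 0"
proof -
  have Zd': "Z = -1/(R^3 * Q)" using Zd nz by (simp add: field_simps)
  show "(w/R)^3 + (w/R)^2 + Z = 0" unfolding Zd' using nz apply (simp add: field_simps)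
    using wv Qd RQ by algebra
  show "(v/R)^3 + (v/R)^2 + Z = 0" unfolding Zd' using nz apply (simp add: field_simps)
    using wv Qd RQ by algebra
  show "(1/(R * Q))^3 + (1/(R * Q))^2 + Z = 0" unfolding Zd' using nz apply (simp add: field_simps)
    using wv Qd RQ by algebra
qed

lemma sin_conv:
  fixes th :: real
  shows "complex_of_real (sin (real k * th)) = (exp (\<i> * complex_of_real th) ^ k - exp (- \<i> * complex_of_real th) ^ k) / (2 * \<i>)"
proof -
  have "complex_of_real (sin (real k * th)) = sin (of_nat k * complex_of_real th)"
    by (simp flip: sin_of_real)
  also have "\<dots> = (exp (of_nat k * (\<i> * complex_of_real th)) - exp (of_nat k * (- \<i> * complex_of_real th))) / (2 * \<i>)"
    unfolding sin_exp_eq by (simp add: algebra_simps)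
  also have "\<dots> = (exp (\<i> * complex_of_real th) ^ k - exp (- \<i> * complex_of_real th) ^ k) / (2 * \<i>)"
    by (simp only: exp_of_nat_mult)
  finally show ?thesis .
qed

theorem mainTheorem17:
  fixes \<theta> :: real and m :: nat
  assumes "2 * pi / 3 < \<theta>" and "\<theta> < pi"
  defines "r \<equiv> r_th \<theta>" and "q \<equiv> q_th \<theta>" and "z \<equiv> z_th \<theta>"
  defines "t1 \<equiv> complex_of_real r * exp (\<i> * complex_of_real \<theta>)"
      and "t2 \<equiv> complex_of_real r * exp (- \<i> * complex_of_real \<theta>)"
      and "t3 \<equiv> complex_of_real (r * q)"
  shows "J m z =
    complex_of_real (q ^ (m + 1) * ((- 2 * cos \<theta>) * sin (real (m + 1) * \<theta>) - sin (real (m + 2) * \<theta>)) + sin \<theta>)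
    / (z * (t1 - t2) * (t2 - t3) * (t3 - t1) * t1 ^ (m + 1) * t2 ^ (m + 1) * t3 ^ (m + 1))
    * (2 * \<i> * complex_of_real (r ^ (2 * m + 3)))"
proof -
  define c where "c = cos \<theta>"
  have c1: "c < -1/2"
  proof -
    have "cos \<theta> < cos (2 * pi / 3)" using assms(1,2) by (intro cos_monotone_0_pi) auto
    moreover have "cos (2 * pi / 3) = -1/2"
    proof -
      have "2 * pi / 3 = pi - pi / 3" by simp
      then show ?thesis by (simp only: cos_pi_minus cos_60)
    qed
    ultimately show ?thesis unfolding c_def by simp
  qed
  have c2: "-1 < c"
  proof -
    have "cos pi < cos \<theta>" using assms(1,2) by (intro cos_monotone_0_pi) auto
    then show ?thesis unfolding c_def by simp
  qed
  have sp: "0 < sin \<theta>" using assms(1,2) by (intro sin_gt_zero) auto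
  have qd: "q = -2 * c" unfolding q_def q_th_def c_def by simp
  have rd: "r = (1 - 4 * c^2) / (2 * c)" unfolding r_def r_th_def c_def by simp
  have q0: "q \<noteq> 0" using qd c1 by simp
  have rq: "r * q = q^2 - 1" using c1 unfolding rd qd by (simp add: field_simps power2_eq_square)
  have r0: "r \<noteq> 0"
  proof
    assume "r = 0"
    then have "q^2 = 1" using rq by simp
    moreover have "q > 1" using qd c1 by simp
    ultimately show False by (simp add: power2_eq_square) (smt (verit) mult_less_cancel_left2)
  qed
  define w where "w = exp (\<i> * complex_of_real \<theta>)"
  define v where "v = exp (- \<i> * complex_of_real \<theta>)"
  define Q where "Q = complex_of_real q"
  define R where "R = complex_of_real r"
  have wv: "w * v = 1" unfolding w_def v_def by (simp flip: exp_add)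
  have Qd: "Q = -(w + v)"
  proof -
    have "Q = - 2 * cos (complex_of_real \<theta>)" unfolding Q_def qd c_def by (simp flip: cos_of_real)
    also have "\<dots> = -(w + v)" unfolding cos_exp_eq w_def v_def by simp
    finally show ?thesis .
  qed
  have RQ: "R * Q = Q^2 - 1" unfolding R_def Q_def using rq
    by (metis of_real_1 of_real_diff of_real_mult of_real_power)
  have zd: "z = complex_of_real (-1 / (r^3 * q))" unfolding z_def z_th_def r_def q_def by simp
  have Zd: "z * R^3 * Q = -1" unfolding zd R_def Q_def using r0 q0
    by (simp flip: of_real_mult of_real_power add: field_simps)
  have R0: "R \<noteq> 0" "Q \<noteq> 0" using r0 q0 unfolding R_def Q_def by auto
  have z0: "z \<noteq> 0" using Zd by auto
  have sconv: "complex_of_real (sin (real k * \<theta>)) = (w^k - v^k) / (2 * \<i>)" for k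
    unfolding w_def v_def by (rule sin_conv)
  have s1: "complex_of_real (sin \<theta>) = (w^1 - v^1) / (2 * \<i>)" using sconv[of 1] by simp
  have wnv: "w \<noteq> v" using s1 sp by auto
  have Imw: "Im w = sin \<theta>" "Im v = - sin \<theta>" unfolding w_def v_def by (simp_all add: Im_exp)
  have wQ: "w \<noteq> Q" using Imw sp unfolding Q_def by auto
  have vQ: "v \<noteq> Q" using Imw sp unfolding Q_def by auto
  define D where "D \<equiv> (R * w - R * v) * (R * v - R * Q) * (R * Q - R * w)"
  define al where "al \<equiv> (Q * w-w^2)/(z * D)"
  define be where "be \<equiv> -(Q * v-v^2)/(z * D)"
  define ga where "ga \<equiv> (w-v)/(Q * z * D)"
  define H where "H n = al * (w/R)^n + be * (v/R)^n + ga * (1/(R * Q))^n" for n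
  have rts: "(w/R)^3 + (w/R)^2 + z = 0" "(v/R)^3 + (v/R)^2 + z = 0" "(1/(R * Q))^3 + (1/(R * Q))^2 + z = 0"
    using roots[OF wv Qd RQ Zd R0] by auto
  have Hrec: "H (n+3) = - H (n+2) - z * H n" for n
    using root_rec[OF rts(1), of al n] root_rec[OF rts(2), of be n] root_rec[OF rts(3), of ga n]
    unfolding H_def by (simp only:) (simp add: algebra_simps)
  have Hinit: "H 0 = 1" "H 1 = -1" "H 2 = 1"
    using alg[OF wv Qd RQ Zd R0 wnv vQ wQ] unfolding H_def al_def be_def ga_def D_def by simp_all
  have JH: "J n z = H n \<and> J (n+1) z = H (n+1) \<and> J (n+2) z = H (n+2)" for n
  proof (induction n)
    case 0
    have "J 0 z = H 0" "J 1 z = H 1" "J 2 z = H 2" using Hinit J_rec(1-3) by simp_all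
    then show ?case by (simp only: add_0)
  next
    case (Suc n)
    have e: "Suc n + 2 = n + 3" "Suc n + 1 = n + 2" "Suc n = n + 1" by simp_all
    show ?case unfolding e using Suc.IH Hrec[of n] J_rec(4)[of n z] by (simp add: numeral_3_eq_3)
  qed
  have rep: "(Q^(m+1) * (Q * ((w^(m+1) - v^(m+1))/(2*\<i>)) - (w^(m+2) - v^(m+2))/(2*\<i>)) + (w^1 - v^1)/(2*\<i>))
    / (z * (R * w - R * v) * (R * v - R * Q) * (R * Q - R * w) * (R * w)^(m+1) * (R * v)^(m+1) * (R * Q)^(m+1))
    * (2 * \<i> * R^(2*m+3)) = H m"
    unfolding H_def al_def be_def ga_def D_def using repr[OF wv R0 z0 wnv vQ wQ] by simp
  have t: "t1 = R * w" "t2 = R * v" "t3 = R * Q" unfolding t1_def t2_def t3_def R_def w_def v_def Q_def by simp_all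
  have lhs: "complex_of_real (q ^ (m + 1) * ((- 2 * cos \<theta>) * sin (real (m + 1) * \<theta>) - sin (real (m + 2) * \<theta>)) + sin \<theta>)
     = Q^(m+1) * (Q * ((w^(m+1) - v^(m+1))/(2*\<i>)) - (w^(m+2) - v^(m+2))/(2*\<i>)) + (w^1 - v^1)/(2*\<i>)"
  proof -
    have "- 2 * cos \<theta> = q" unfolding qd c_def by simp
    then show ?thesis unfolding Q_def
      by (simp only: of_real_add of_real_mult of_real_diff of_real_power sconv s1)
  qed
  show ?thesis unfolding lhs t R_def[symmetric] using rep JH[of m] by (simp add: R_def)
qed

end
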